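(* Assume that no connected component of nonabsorbing action profiles is rectangular. If $w\in W_H\setminus W$, then there are $\ell\in\{1,\dots,L\}$ and $x\in X^\ell$ such that $w\in W_H(x)$ and ${\cal E}_J(x)\ne\emptyset$.
   Context: $I$ is a finite set of players, $A_i$ finite nonempty action sets, $A=\prod_iA_i$, $r_i:A\to(0,1]$, $p:A\to[0,1]$. $B=\{a:p(a)=0\}$ with connected components $B^1,\dots,B^L$ in the graph where $a,a'\in B$ are adjacent iff $a_{-i}=a'_{-i}$ for some $i$; $B^\ell$ is rectangular if it is a product $\prod_iB^\ell_i$. Let $\Xi=\prod_i\Delta(A_i)$, $p(x)$ and $r_i(x)$ the multilinear extensions ($r_i(x)=\sum_ar_i(a)p(a)\prod_jx_j(a_j)/p(x)$ when $p(x)>0$), $X^\ell=\{x\in\Xi:\prod_i{\rm supp}(x_i)\subseteq B^\ell\}$, $X=\bigcup_\ell X^\ell$. $\rho_i(x):=\max\{r_i(a_i,x_{-i}):a_i\in A_i,\ p(a_i,x_{-i})>0\}$, with $\max\emptyset=-\infty$. For $x\in X$: $W_H(x):=\{w\in\mathbb R^I:w_i>\rho_i(x)\ \forall i\}$; $W(x):=\{w\in\mathbb R^I: w_i\ge\rho_i(x)\ \forall i,\ w_i=\rho_i(x)\text{ for some }i\}$; $W_H:=\bigcup_{x\in X}W_H(x)$, $W:=\bigcup_{x\in X}W(x)$. For $x\in X$, $(J,a_J)$ with $\emptyset\neq J\subseteq I$, $a_J\in\prod_{i\in J}A_i$, is an exit at $x$ if $p(a_J,x_{-J})>0$ and $p(a_{J'},x_{-J'})=0$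 for all proper $J'\subsetneq J$; a joint exit if $|J|\ge 2$; ${\cal E}_J(x)$ is the set of joint exits at $x$. *)

theory Defs
  imports "HOL-Analysis.Analysis" "HOL-Library.Extended_Real"
begin

text \<open>Players: finite set I. Action sets: A i. Pure action profiles: PiE I A.
  Mixed strategy profiles: x i a = probability that player i plays a.\<close>

type_synonym ('i,'a) mixed = "'i \<Rightarrow> 'a \<Rightarrow> real"

definition profiles :: "'i set \<Rightarrow> ('i \<Rightarrow> 'a set) \<Rightarrow> ('i \<Rightarrow> 'a) set" where
  "profiles I A = PiE I A"

definition mixed_profiles :: "'i set \<Rightarrow> ('i \<Rightarrow> 'a set) \<Rightarrow> ('i,'a) mixed set" where
  "mixed_profiles I A = {x. \<forall>i\<in>I. (\<forall>a\<in>A i. x i a \<ge> 0) \<and> (\<forall>a. a \<notin> A i \<longrightarrow> x i a = 0)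
                                 \<and> sum (x i) (A i) = 1}"

definition mlext :: "'i set \<Rightarrow> ('i \<Rightarrow> 'a set) \<Rightarrow> (('i \<Rightarrow> 'a) \<Rightarrow> real) \<Rightarrow> ('i,'a) mixed \<Rightarrow> real" where
  "mlext I A f x = (\<Sum>a\<in>profiles I A. f a * (\<Prod>j\<in>I. x j (a j)))"

definition p_ext :: "'i set \<Rightarrow> ('i \<Rightarrow> 'a set) \<Rightarrow> (('i \<Rightarrow> 'a) \<Rightarrow> real) \<Rightarrow> ('i,'a) mixed \<Rightarrow> real" where
  "p_ext I A p x = mlext I A p x"

text \<open>r_i(x) = sum_a r_i(a) p(a) prod_j x_j(a_j) / p(x) (only used when p(x) > 0)\<close>
definition r_ext :: "'i set \<Rightarrow> ('i \<Rightarrow> 'a set) \<Rightarrow> (('i \<Rightarrow> 'a) \<Rightarrow> real) \<Rightarrow> ('i \<Rightarrow> ('i \<Rightarrow> 'a) \<Rightarrow> real)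
                     \<Rightarrow> 'i \<Rightarrow> ('i,'a) mixed \<Rightarrow> real" where
  "r_ext I A p r i x = mlext I A (\<lambda>a. r i a * p a) x / p_ext I A p x"

definition pure :: "'a \<Rightarrow> 'a \<Rightarrow> real" where
  "pure b = (\<lambda>c. if c = b then 1 else 0)"

definition deviate :: "'i set \<Rightarrow> ('i \<Rightarrow> 'a) \<Rightarrow> ('i,'a) mixed \<Rightarrow> ('i,'a) mixed" where
  "deviate J aJ x = (\<lambda>j. if j \<in> J then pure (aJ j) else x j)"

definition rho :: "'i set \<Rightarrow> ('i \<Rightarrow> 'a set) \<Rightarrow> (('i \<Rightarrow> 'a) \<Rightarrow> real) \<Rightarrow> ('i \<Rightarrow> ('i \<Rightarrow> 'a) \<Rightarrow> real)
                   \<Rightarrow> ('i,'a) mixed \<Rightarrow> 'i \<Rightarrow> ereal" where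
  "rho I A p r x i =
     (let S = {ereal (r_ext I A p r i (deviate {i} (\<lambda>_. ai) x)) | ai.
                 ai \<in> A i \<and> p_ext I A p (deviate {i} (\<lambda>_. ai) x) > 0}
      in if S = {} then -\<infinity> else Max S)"

definition nonabs :: "'i set \<Rightarrow> ('i \<Rightarrow> 'a set) \<Rightarrow> (('i \<Rightarrow> 'a) \<Rightarrow> real) \<Rightarrow> ('i \<Rightarrow> 'a) set" where
  "nonabs I A p = {a \<in> profiles I A. p a = 0}"

definition adj :: "'i set \<Rightarrow> ('i \<Rightarrow> 'a set) \<Rightarrow> (('i \<Rightarrow> 'a) \<Rightarrow> real) \<Rightarrow> ('i \<Rightarrow> 'a) \<Rightarrow> ('i \<Rightarrow> 'a) \<Rightarrow> bool" where
  "adj I A p a b \<longleftrightarrow> a \<in> nonabs I A p \<and> b \<in> nonabs I A p \<and>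
                       (\<exists>i\<in>I. \<forall>j\<in>I - {i}. a j = b j)"

definition components :: "'i set \<Rightarrow> ('i \<Rightarrow> 'a set) \<Rightarrow> (('i \<Rightarrow> 'a) \<Rightarrow> real) \<Rightarrow> ('i \<Rightarrow> 'a) set set" where
  "components I A p = {{b \<in> nonabs I A p. (adj I A p)\<^sup>*\<^sup>* a b} | a. a \<in> nonabs I A p}"

definition rectangular :: "'i set \<Rightarrow> ('i \<Rightarrow> 'a) set \<Rightarrow> bool" where
  "rectangular I C \<longleftrightarrow> (\<exists>Ci. C = PiE I Ci)"

definition supp :: "('a \<Rightarrow> real) \<Rightarrow> 'a set \<Rightarrow> 'a set" where
  "supp xi Ai = {a \<in> Ai. xi a > 0}"

definition Xcomp :: "'i set \<Rightarrow> ('i \<Rightarrow> 'a set) \<Rightarrow> ('i \<Rightarrow> 'a) set \<Rightarrow> ('i,'a) mixed set" where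
  "Xcomp I A C = {x \<in> mixed_profiles I A. PiE I (\<lambda>i. supp (x i) (A i)) \<subseteq> C}"

definition Xall :: "'i set \<Rightarrow> ('i \<Rightarrow> 'a set) \<Rightarrow> (('i \<Rightarrow> 'a) \<Rightarrow> real) \<Rightarrow> ('i,'a) mixed set" where
  "Xall I A p = (\<Union>C\<in>components I A p. Xcomp I A C)"

definition WH_at :: "'i set \<Rightarrow> ('i \<Rightarrow> 'a set) \<Rightarrow> (('i \<Rightarrow> 'a) \<Rightarrow> real) \<Rightarrow> ('i \<Rightarrow> ('i \<Rightarrow> 'a) \<Rightarrow> real)
                     \<Rightarrow> ('i,'a) mixed \<Rightarrow> ('i \<Rightarrow> real) set" where
  "WH_at I A p r x = {w. \<forall>i\<in>I. ereal (w i) > rho I A p r x i}"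

definition W_at :: "'i set \<Rightarrow> ('i \<Rightarrow> 'a set) \<Rightarrow> (('i \<Rightarrow> 'a) \<Rightarrow> real) \<Rightarrow> ('i \<Rightarrow> ('i \<Rightarrow> 'a) \<Rightarrow> real)
                     \<Rightarrow> ('i,'a) mixed \<Rightarrow> ('i \<Rightarrow> real) set" where
  "W_at I A p r x = {w. (\<forall>i\<in>I. ereal (w i) \<ge> rho I A p r x i) \<and>
                          (\<exists>i\<in>I. ereal (w i) = rho I A p r x i)}"

definition WH :: "'i set \<Rightarrow> ('i \<Rightarrow> 'a set) \<Rightarrow> (('i \<Rightarrow> 'a) \<Rightarrow> real) \<Rightarrow> ('i \<Rightarrow> ('i \<Rightarrow> 'a) \<Rightarrow> real)
                     \<Rightarrow> ('i \<Rightarrow> real) set" where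
  "WH I A p r = (\<Union>x\<in>Xall I A p. WH_at I A p r x)"

definition W :: "'i set \<Rightarrow> ('i \<Rightarrow> 'a set) \<Rightarrow> (('i \<Rightarrow> 'a) \<Rightarrow> real) \<Rightarrow> ('i \<Rightarrow> ('i \<Rightarrow> 'a) \<Rightarrow> real)
                     \<Rightarrow> ('i \<Rightarrow> real) set" where
  "W I A p r = (\<Union>x\<in>Xall I A p. W_at I A p r x)"

definition is_exit :: "'i set \<Rightarrow> ('i \<Rightarrow> 'a set) \<Rightarrow> (('i \<Rightarrow> 'a) \<Rightarrow> real) \<Rightarrow> ('i,'a) mixed
                        \<Rightarrow> 'i set \<Rightarrow> ('i \<Rightarrow> 'a) \<Rightarrow> bool" where
  "is_exit I A p x J aJ \<longleftrightarrow> J \<noteq> {} \<and> J \<subseteq> I \<and> aJ \<in> PiE J A \<and>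
      p_ext I A p (deviate J aJ x) > 0 \<and>
      (\<forall>J'. J' \<subset> J \<longrightarrow> p_ext I A p (deviate J' aJ x) = 0)"

definition joint_exits :: "'i set \<Rightarrow> ('i \<Rightarrow> 'a set) \<Rightarrow> (('i \<Rightarrow> 'a) \<Rightarrow> real) \<Rightarrow> ('i,'a) mixed
                        \<Rightarrow> ('i set \<times> ('i \<Rightarrow> 'a)) set" where
  "joint_exits I A p x = {(J, aJ). is_exit I A p x J aJ \<and> card J \<ge> 2}"

end

theory Submission
  imports Defs
begin



locale game =
  fixes I :: "'i set" and A :: "'i \<Rightarrow> 'a set" and p :: "('i \<Rightarrow> 'a) \<Rightarrow> real"
  assumes finI: "finite I" and finA: "\<And>i. i\<in>I \<Longrightarrow> finite (A i)" and neA: "\<And>i. i\<in>I \<Longrightarrow> A i \<noteq> {}"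
    and pnn: "\<And>a. a\<in>profiles I A \<Longrightarrow> 0 \<le> p a"
begin

lemma mixedD:
  assumes "y \<in> mixed_profiles I A" "i \<in> I"
  shows "\<And>a. 0 \<le> y i a" "\<And>a. a \<notin> A i \<Longrightarrow> y i a = 0" "sum (y i) (A i) = 1"
  using assms unfolding mixed_profiles_def by (auto, metis order_refl)

lemma p_ext_nonneg:
  assumes "y \<in> mixed_profiles I A"
  shows "0 \<le> p_ext I A p y"
  unfolding p_ext_def mlext_def
  using assms pnn by (auto intro!: sum_nonneg mult_nonneg_nonneg prod_nonneg simp: profiles_def mixedD)

lemma p_ext_zero_iff:
  assumes "y \<in> mixed_profiles I A"
  shows "p_ext I A p y = 0 \<longleftrightarrow> (\<forall>b\<in>PiE I (\<lambda>j. supp (y j) (A j)). p b = 0)"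
proof -
  have fin: "finite (profiles I A)" unfolding profiles_def using finI finA by (simp add: finite_PiE)
  have "p_ext I A p y = 0 \<longleftrightarrow> (\<forall>b\<in>profiles I A. p b * (\<Prod>j\<in>I. y j (b j)) = 0)"
    unfolding p_ext_def mlext_def
    by (rule sum_nonneg_eq_0_iff[OF fin])
      (use assms pnn in \<open>auto intro!: mult_nonneg_nonneg prod_nonneg simp: profiles_def mixedD\<close>)
  also have "\<dots> \<longleftrightarrow> (\<forall>b\<in>PiE I (\<lambda>j. supp (y j) (A j)). p b = 0)"
  proof
    assume H: "\<forall>b\<in>profiles I A. p b * (\<Prod>j\<in>I. y j (b j)) = 0"
    show "\<forall>b\<in>PiE I (\<lambda>j. supp (y j) (A j)). p b = 0"
    proof
      fix b assume b: "b \<in> PiE I (\<lambda>j. supp (y j) (A j))"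
      hence bp: "b \<in> profiles I A" unfolding profiles_def supp_def by (auto simp: PiE_iff)
      have "(\<Prod>j\<in>I. y j (b j)) \<noteq> 0" using b finI unfolding supp_def by (auto simp: PiE_iff)
      thus "p b = 0" using H bp by auto
    qed
  next
    assume H: "\<forall>b\<in>PiE I (\<lambda>j. supp (y j) (A j)). p b = 0"
    show "\<forall>b\<in>profiles I A. p b * (\<Prod>j\<in>I. y j (b j)) = 0"
    proof
      fix b assume bp: "b \<in> profiles I A"
      show "p b * (\<Prod>j\<in>I. y j (b j)) = 0"
      proof (cases "b \<in> PiE I (\<lambda>j. supp (y j) (A j))")
        case True thus ?thesis using H by auto
      next
        case False
        then obtain j where "j \<in> I" "b j \<notin> supp (y j) (A j)" using bp unfolding profiles_def
          by (auto simp: PiE_iff)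
        moreover have "b j \<in> A j" using bp \<open>j\<in>I\<close> unfolding profiles_def by auto
        ultimately have "y j (b j) = 0" using mixedD[OF assms \<open>j\<in>I\<close>] unfolding supp_def
          by (metis (mono_tags, lifting) mem_Collect_eq order_less_le)
        thus ?thesis using finI \<open>j\<in>I\<close> by (simp add: prod_zero_iff) blast
      qed
    qed
  qed
  finally show ?thesis .
qed

lemma p_ext_mono:
  assumes "y \<in> mixed_profiles I A" "y' \<in> mixed_profiles I A"
    "\<And>j. j\<in>I \<Longrightarrow> supp (y' j) (A j) \<subseteq> supp (y j) (A j)" "p_ext I A p y = 0"
  shows "p_ext I A p y' = 0"
  using assms p_ext_zero_iff PiE_mono by (smt (verit, ccfv_SIG) subsetD)

lemma supp_pure: "b \<in> Ai \<Longrightarrow> supp (pure b) Ai = {b}"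
  unfolding supp_def pure_def by auto

lemma supp_deviate:
  assumes "j \<in> J \<Longrightarrow> aJ j \<in> A j"
  shows "supp (deviate J aJ x j) (A j) = (if j \<in> J then {aJ j} else supp (x j) (A j))"
  by (cases "j \<in> J") (simp_all add: deviate_def supp_pure assms)

lemma mixed_deviate:
  assumes "x \<in> mixed_profiles I A" "\<And>j. j \<in> J \<Longrightarrow> j \<in> I \<Longrightarrow> aJ j \<in> A j"
  shows "deviate J aJ x \<in> mixed_profiles I A"
  unfolding mixed_profiles_def
proof (intro CollectI ballI conjI allI impI)
  fix i a assume i: "i \<in> I" and "a \<in> A i"
  show "0 \<le> deviate J aJ x i a"
    using mixedD[OF assms(1) i] by (auto simp: deviate_def pure_def)
next
  fix i a assume i: "i \<in> I" and "a \<notin> A i"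
  show "deviate J aJ x i a = 0"
    using mixedD[OF assms(1) i] assms(2) i \<open>a \<notin> A i\<close> by (auto simp: deviate_def pure_def)
next
  fix i assume i: "i \<in> I"
  show "sum (deviate J aJ x i) (A i) = 1"
  proof (cases "i \<in> J")
    case True
    have "sum (pure (aJ i)) (A i) = 1" using assms(2)[OF True i] finA[OF i]
      unfolding pure_def by (simp add: sum.delta')
    thus ?thesis using True by (simp add: deviate_def)
  qed (use mixedD[OF assms(1) i] in \<open>simp add: deviate_def\<close>)
qed

lemma mixed_comb:
  assumes "x \<in> mixed_profiles I A" "y \<in> mixed_profiles I A" "0 \<le> t" "t \<le> 1"
  shows "(\<lambda>j a. (1-t) * x j a + t * y j a) \<in> mixed_profiles I A"
  unfolding mixed_profiles_def
proof (intro CollectI ballI conjI allI impI)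
  fix i a assume i: "i \<in> I" and "a \<in> A i"
  show "0 \<le> (1-t) * x i a + t * y i a" using mixedD[OF assms(1) i] mixedD[OF assms(2) i] assms by auto
next
  fix i a assume i: "i \<in> I" and "a \<notin> A i"
  show "(1-t) * x i a + t * y i a = 0" using mixedD[OF assms(1) i] mixedD[OF assms(2) i] \<open>a \<notin> A i\<close> by auto
next
  fix i assume i: "i \<in> I"
  show "(\<Sum>a\<in>A i. (1-t) * x i a + t * y i a) = 1"
    using mixedD[OF assms(1) i] mixedD[OF assms(2) i] by (simp add: sum.distrib sum_distrib_left[symmetric])
qed

lemma supp_comb_sub:
  assumes "\<forall>a\<in>Ai. 0 \<le> u a" "\<forall>a\<in>Ai. 0 \<le> v a" "0 \<le> t" "t \<le> 1"
  shows "supp (\<lambda>a. (1-t) * u a + t * v a) Ai \<subseteq> supp u Ai \<union> supp v Ai"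
proof
  fix a assume "a \<in> supp (\<lambda>a. (1-t) * u a + t * v a) Ai"
  hence a: "a \<in> Ai" "0 < (1-t) * u a + t * v a" unfolding supp_def by auto
  have "0 < u a \<or> 0 < v a"
  proof (rule ccontr)
    assume "\<not> ?thesis"
    hence "u a = 0" "v a = 0" using assms a by force+
    thus False using a by simp
  qed
  thus "a \<in> supp u Ai \<union> supp v Ai" using a unfolding supp_def by auto
qed

lemma supp_comb_sup1:
  assumes "\<forall>a\<in>Ai. 0 \<le> u a" "\<forall>a\<in>Ai. 0 \<le> v a" "0 \<le> t" "t < 1"
  shows "supp u Ai \<subseteq> supp (\<lambda>a. (1-t) * u a + t * v a) Ai"
proof
  fix a assume "a \<in> supp u Ai"
  hence a: "a \<in> Ai" "0 < u a" unfolding supp_def by auto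
  have "0 < (1-t) * u a" using a assms by simp
  moreover have "0 \<le> t * v a" using a assms by simp
  ultimately show "a \<in> supp (\<lambda>a. (1-t) * u a + t * v a) Ai" using a unfolding supp_def by simp
qed

lemma supp_nonempty:
  assumes "x \<in> mixed_profiles I A" "i \<in> I"
  shows "supp (x i) (A i) \<noteq> {}"
proof
  assume "supp (x i) (A i) = {}"
  hence "\<forall>a\<in>A i. x i a = 0" using mixedD[OF assms] unfolding supp_def
    by (metis (mono_tags, lifting) empty_iff mem_Collect_eq order_less_le)
  thus False using mixedD(3)[OF assms] by simp
qed

end



context game begin

lemma rho_ge:
  assumes "b \<in> A i" "p_ext I A p (deviate {i} (\<lambda>_. b) x) > 0" "finite (A i)"
  shows "ereal (r_ext I A p r i (deviate {i} (\<lambda>_. b) x)) \<le> rho I A p r x i"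
proof -
  let ?S = "{ereal (r_ext I A p r i (deviate {i} (\<lambda>_. ai) x)) | ai. ai \<in> A i \<and> p_ext I A p (deviate {i} (\<lambda>_. ai) x) > 0}"
  have fin: "finite ?S"
    by (rule finite_subset[of _ "(\<lambda>ai. ereal (r_ext I A p r i (deviate {i} (\<lambda>_. ai) x))) ` A i"])
      (use assms in auto)
  have mem: "ereal (r_ext I A p r i (deviate {i} (\<lambda>_. b) x)) \<in> ?S" using assms by blast
  hence "?S \<noteq> {}" by auto
  thus ?thesis unfolding rho_def Let_def using Max_ge[OF fin mem] by simp
qed

lemma rho_le:
  assumes "\<forall>b\<in>A i. p_ext I A p (deviate {i} (\<lambda>_. b) x) > 0 \<longrightarrow> r_ext I A p r i (deviate {i} (\<lambda>_. b) x) \<le> v"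
    "finite (A i)"
  shows "rho I A p r x i \<le> ereal v"
proof -
  let ?S = "{ereal (r_ext I A p r i (deviate {i} (\<lambda>_. ai) x)) | ai. ai \<in> A i \<and> p_ext I A p (deviate {i} (\<lambda>_. ai) x) > 0}"
  have fin: "finite ?S"
    by (rule finite_subset[of _ "(\<lambda>ai. ereal (r_ext I A p r i (deviate {i} (\<lambda>_. ai) x))) ` A i"])
      (use assms in auto)
  show ?thesis
  proof (cases "?S = {}")
    case True thus ?thesis unfolding rho_def Let_def by simp
  next
    case False
    have "Max ?S \<le> ereal v" using fin False assms(1) by (subst Max_le_iff) auto
    thus ?thesis unfolding rho_def Let_def using False by simp
  qed
qed

end

lemma cont_mlext: "continuous_on T (\<lambda>t. mlext I A F (deviate J aJ (\<lambda>j a. (1-t) * x j a + t * y j a)))"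
  unfolding mlext_def
  apply (intro continuous_on_sum continuous_on_mult continuous_on_const continuous_on_prod)
  subgoal for a j by (cases "j \<in> J") (auto simp: deviate_def intro!: continuous_intros)
  done

lemma cont_limit_le:
  fixes g :: "real \<Rightarrow> real"
  assumes "continuous_on {0..1} g" "\<forall>t\<in>{0..<1}. g t < c"
  shows "g 1 \<le> c"
proof (rule ccontr)
  assume "\<not> g 1 \<le> c"
  hence e: "g 1 - c > 0" by simp
  have "1 \<in> {0..(1::real)}" by simp
  then obtain d where d: "d > 0" "\<forall>x'\<in>{0..1}. dist x' 1 < d \<longrightarrow> dist (g x') (g 1) < g 1 - c"
    using assms(1) e unfolding continuous_on_iff by blast
  define t where "t = max 0 (1 - d/2)"
  have t: "t \<in> {0..<1}" "dist t 1 < d" using d(1) by (auto simp: t_def dist_real_def)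
  hence "dist (g t) (g 1) < g 1 - c" using d(2) by auto
  moreover have "g t < c" using assms(2) t by auto
  ultimately show False by (auto simp: dist_real_def)
qed

lemma continuous_on_Max:
  fixes g :: "'k \<Rightarrow> real \<Rightarrow> real"
  assumes "finite P" "P \<noteq> {}" "\<forall>k\<in>P. continuous_on S (g k)"
  shows "continuous_on S (\<lambda>t. Max ((\<lambda>k. g k t) ` P))"
  using assms
proof (induction P rule: finite_ne_induct)
  case (singleton k) thus ?case by simp
next
  case (insert k P)
  have "(\<lambda>t. Max ((\<lambda>k. g k t) ` insert k P)) = (\<lambda>t. max (g k t) (Max ((\<lambda>k. g k t) ` P)))"
    using insert by (auto simp: Max_insert)
  thus ?case using insert by (auto intro!: continuous_on_max)
qed




context game begin

lemma path_lemma: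
  fixes x y :: "('i,'a) mixed" and w :: "'i \<Rightarrow> real" and r and \<gamma> :: "real \<Rightarrow> ('i,'a) mixed"
  assumes gdef: "\<gamma> = (\<lambda>t::real. (\<lambda>j a. (1-t) * x j a + t * y j a))"
  and notW: "\<forall>t\<in>{0..1}. w \<notin> W_at I A p r (\<gamma> t)"
   and wx: "w \<in> WH_at I A p r x"
   and avail: "\<forall>t\<in>{0..<1}. \<forall>j\<in>I. \<forall>b\<in>A j. (p_ext I A p (deviate {j} (\<lambda>_. b) (\<gamma> t)) > 0 \<longleftrightarrow> p_ext I A p (deviate {j} (\<lambda>_. b) x) > 0)"
   and availy: "\<forall>j\<in>I. \<forall>b\<in>A j. p_ext I A p (deviate {j} (\<lambda>_. b) y) > 0 \<longrightarrow> p_ext I A p (deviate {j} (\<lambda>_. b) x) > 0"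
  shows "w \<in> WH_at I A p r y"
proof -
  define P where "P = {(j,b). j \<in> I \<and> b \<in> A j \<and> p_ext I A p (deviate {j} (\<lambda>_. b) x) > 0}"
  define f where "f = (\<lambda>k t. r_ext I A p r (fst k) (deviate {fst k} (\<lambda>_. snd k) (\<gamma> t)))"
  define \<phi> where "\<phi> = (\<lambda>t. Max ((\<lambda>k. f k t - w (fst k)) ` P))"
  have finP: "finite P"
    by (rule finite_subset[of _ "Sigma I A"]) (auto simp: P_def finI finA)
  have g0: "\<gamma> 0 = x" and g1: "\<gamma> 1 = y" by (simp_all add: gdef)
  have contf: "continuous_on {0..<1} (f k)" if k: "k \<in> P" for k
  proof -
    obtain j b where kk: "k = (j,b)" "j \<in> I" "b \<in> A j" using k by (auto simp: P_def)
    have pos: "\<forall>t\<in>{0..<1}. p_ext I A p (deviate {j} (\<lambda>_. b) (\<gamma> t)) \<noteq> 0"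
    proof
      fix t :: real assume t: "t \<in> {0..<1}"
      have "p_ext I A p (deviate {j} (\<lambda>_. b) x) > 0" using k kk by (auto simp: P_def)
      moreover have "(p_ext I A p (deviate {j} (\<lambda>_. b) (\<gamma> t)) > 0 \<longleftrightarrow> p_ext I A p (deviate {j} (\<lambda>_. b) x) > 0)"
        using bspec[OF bspec[OF bspec[OF avail t] kk(2)] kk(3)] .
      ultimately show "p_ext I A p (deviate {j} (\<lambda>_. b) (\<gamma> t)) \<noteq> 0" by simp
    qed
    show ?thesis unfolding f_def kk r_ext_def p_ext_def fst_conv snd_conv
      using pos unfolding p_ext_def gdef
      by (intro continuous_on_divide cont_mlext) auto
  qed
  have phi_neg: "\<phi> t < 0" if Pne: "P \<noteq> {}" and t: "t \<in> {0..<1}" for t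
  proof -
    have contphi: "continuous_on {0..<1} \<phi>"
      unfolding \<phi>_def using finP Pne contf
      by (intro continuous_on_Max) (auto intro!: continuous_intros)
    have phi0: "\<phi> 0 < 0"
    proof -
      have "f k 0 - w (fst k) < 0" if k: "k \<in> P" for k
      proof -
        obtain j b where kk: "k = (j,b)" "j \<in> I" "b \<in> A j" "p_ext I A p (deviate {j} (\<lambda>_. b) x) > 0"
          using k by (auto simp: P_def)
        have "ereal (f k 0) \<le> rho I A p r x j"
          using rho_ge[OF kk(3) kk(4) finA[OF kk(2)]] by (simp add: f_def kk g0)
        also have "\<dots> < ereal (w j)" using wx kk(2) by (auto simp: WH_at_def)
        finally show ?thesis using kk by simp
      qed
      thus ?thesis unfolding \<phi>_def using finP Pne by (subst Max_less_iff) auto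
    qed
    have phine: "\<phi> s \<noteq> 0" if s: "s \<in> {0..<1}" for s
    proof
      assume H: "\<phi> s = 0"
      have all: "\<forall>k\<in>P. f k s - w (fst k) \<le> 0"
      proof
        fix k assume "k \<in> P"
        hence "f k s - w (fst k) \<le> \<phi> s" unfolding \<phi>_def using finP by (intro Max_ge) auto
        thus "f k s - w (fst k) \<le> 0" using H by simp
      qed
      have "\<phi> s \<in> (\<lambda>k. f k s - w (fst k)) ` P" unfolding \<phi>_def using finP Pne
        by (intro Max_in) auto
      hence "0 \<in> (\<lambda>k. f k s - w (fst k)) ` P" using H by simp
      then obtain k where k: "k \<in> P" "f k s - w (fst k) = 0" by auto
      obtain j b where kk: "k = (j,b)" "j \<in> I" "b \<in> A j" "p_ext I A p (deviate {j} (\<lambda>_. b) x) > 0"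
        using k by (auto simp: P_def)
      have le: "rho I A p r (\<gamma> s) i \<le> ereal (w i)" if i: "i \<in> I" for i
      proof (rule rho_le[OF _ finA[OF i]], intro ballI impI)
        fix c assume c: "c \<in> A i" "p_ext I A p (deviate {i} (\<lambda>_. c) (\<gamma> s)) > 0"
        hence "(i,c) \<in> P" using bspec[OF bspec[OF bspec[OF avail s] i] c(1)] i by (auto simp: P_def)
        thus "r_ext I A p r i (deviate {i} (\<lambda>_. c) (\<gamma> s)) \<le> w i" using all by (force simp: f_def)
      qed
      have "ereal (f k s) \<le> rho I A p r (\<gamma> s) j"
        using rho_ge[OF kk(3) _ finA[OF kk(2)]] bspec[OF bspec[OF bspec[OF avail s] kk(2)] kk(3)] kk
        by (auto simp: f_def)
      hence eq: "rho I A p r (\<gamma> s) j = ereal (w j)" using le[OF kk(2)] k kk by simp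
      have "w \<in> W_at I A p r (\<gamma> s)" unfolding W_at_def using le eq kk(2) by (auto intro!: bexI[of _ j])
      thus False using notW s by auto
    qed
    show ?thesis
    proof (rule ccontr)
      assume "\<not> \<phi> t < 0"
      hence "0 \<le> \<phi> t" by simp
      moreover have "\<phi> 0 \<le> 0" using phi0 by simp
      moreover have "continuous_on {0..t} \<phi>"
        by (rule continuous_on_subset[OF contphi]) (use t in auto)
      ultimately obtain s where "0 \<le> s" "s \<le> t" "\<phi> s = 0"
        using IVT'[of \<phi> 0 0 t] t by auto
      thus False using phine[of s] t by auto
    qed
  qed
  have le: "rho I A p r y j \<le> ereal (w j)" if j: "j \<in> I" for j
  proof (rule rho_le[OF _ finA[OF j]], intro ballI impI)
    fix b assume b: "b \<in> A j" "p_ext I A p (deviate {j} (\<lambda>_. b) y) > 0"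
    hence k: "(j,b) \<in> P" using availy j by (auto simp: P_def)
    have pos: "\<forall>t\<in>{0..1}. p_ext I A p (deviate {j} (\<lambda>_. b) (\<gamma> t)) \<noteq> 0"
    proof
      fix t :: real assume "t \<in> {0..1}"
      then consider "t \<in> {0..<1}" | "t = 1" by fastforce
      thus "p_ext I A p (deviate {j} (\<lambda>_. b) (\<gamma> t)) \<noteq> 0"
      proof cases
        case 1
        show ?thesis using bspec[OF bspec[OF bspec[OF avail 1] j] b(1)] k by (auto simp: P_def)
      next
        case 2
        show ?thesis using b g1 2 by simp
      qed
    qed
    have cont: "continuous_on {0..1} (f (j,b))"
      unfolding f_def r_ext_def p_ext_def fst_conv snd_conv
      using pos unfolding p_ext_def gdef
      by (intro continuous_on_divide cont_mlext) auto
    have "\<forall>t\<in>{0..<1}. f (j,b) t < w j"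
    proof
      fix t :: real assume t: "t \<in> {0..<1}"
      have "f (j,b) t - w j \<le> \<phi> t" unfolding \<phi>_def using finP k
        by (metis (no_types, lifting) Max_ge finite_imageI fst_conv image_eqI)
      moreover have "P \<noteq> {}" using k by auto
      ultimately show "f (j,b) t < w j" using phi_neg[OF _ t] by fastforce
    qed
    from cont_limit_le[OF cont this]
    show "r_ext I A p r j (deviate {j} (\<lambda>_. b) y) \<le> w j" by (simp add: f_def g1)
  qed
  have "\<forall>j\<in>I. rho I A p r y j < ereal (w j)"
  proof (rule ccontr)
    assume "\<not> ?thesis"
    then obtain j where "j \<in> I" "rho I A p r y j = ereal (w j)" using le
      by (meson order_less_le)
    hence "w \<in> W_at I A p r y" unfolding W_at_def using le by (auto intro!: bexI[of _ j])
    thus False using notW g1 by force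
  qed
  thus ?thesis unfolding WH_at_def by auto
qed

end



definition Ap where "Ap I A p x i = {b \<in> A i. p_ext I A p (deviate {i} (\<lambda>_. b) x) = 0}"

lemma rtranclp_edge: "R\<^sup>*\<^sup>* u v \<Longrightarrow> P u \<Longrightarrow> \<not> P v \<Longrightarrow> \<exists>e e'. R e e' \<and> P e \<and> \<not> P e'"
  by (induction rule: rtranclp_induct) auto

context game begin

lemma noJ_product:
  assumes x: "x \<in> mixed_profiles I A" and px: "p_ext I A p x = 0" and nj: "joint_exits I A p x = {}"
    and a: "a \<in> PiE I (Ap I A p x)"
  shows "p a = 0"
proof (rule ccontr)
  assume "p a \<noteq> 0"
  have aA: "a \<in> profiles I A" using a by (auto simp: Ap_def profiles_def PiE_iff)
  hence pa: "p a > 0" using pnn[OF aA] \<open>p a \<noteq> 0\<close> by simp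
  have aj: "\<And>j. j \<in> I \<Longrightarrow> a j \<in> A j" using aA by (auto simp: profiles_def PiE_iff)
  have devmix: "\<And>J. deviate J a x \<in> mixed_profiles I A" using mixed_deviate[OF x] aj by blast
  define F where "F = {J. J \<subseteq> I \<and> p_ext I A p (deviate J a x) > 0}"
  have "a \<in> PiE I (\<lambda>j. supp (deviate I a x j) (A j))"
    using aA aj supp_deviate[of _ I a x] by (auto simp: profiles_def PiE_iff)
  hence "p_ext I A p (deviate I a x) \<noteq> 0" using p_ext_zero_iff[OF devmix, of I] pa by (metis less_irrefl)
  hence "I \<in> F" using p_ext_nonneg[OF devmix, of I] unfolding F_def by simp
  have "finite F" by (rule finite_subset[of _ "Pow I"]) (auto simp: F_def finI)
  then obtain J where J: "J \<in> F" "\<And>J'. J' \<in> F \<Longrightarrow> J' \<le> J \<Longrightarrow> J = J'"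
    using finite_has_minimal[of F] \<open>I \<in> F\<close> by blast
  have JI: "J \<subseteq> I" and Jpos: "p_ext I A p (deviate J a x) > 0" using J(1) by (auto simp: F_def)
  have dev0: "deviate {} a x = x" by (simp add: deviate_def)
  have Jne: "J \<noteq> {}" using Jpos px dev0 by auto
  have restr: "deviate J' (restrict a J) x = deviate J' a x" if "J' \<subseteq> J" for J'
    using that by (auto simp: deviate_def fun_eq_iff)
  have ex: "is_exit I A p x J (restrict a J)"
    unfolding is_exit_def
  proof (intro conjI allI impI)
    show "J \<noteq> {}" "J \<subseteq> I" by fact+
    show "restrict a J \<in> PiE J A" using JI aj by auto
    show "p_ext I A p (deviate J (restrict a J) x) > 0" using restr[of J] Jpos by simp
  next
    fix J' assume J': "J' \<subset> J"
    hence "J' \<notin> F" using J(2)[of J'] by auto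
    hence "\<not> p_ext I A p (deviate J' a x) > 0" using J' JI unfolding F_def by auto
    thus "p_ext I A p (deviate J' (restrict a J) x) = 0"
      using restr[of J'] J' p_ext_nonneg[OF devmix, of J'] by simp
  qed
  have "card J < 2"
  proof (rule ccontr)
    assume "\<not> card J < 2"
    hence "(J, restrict a J) \<in> joint_exits I A p x" using ex unfolding joint_exits_def by simp
    thus False using nj by simp
  qed
  moreover have "finite J" using JI finI finite_subset by blast
  ultimately have "card J = 1" using Jne by (simp add: card_gt_0_iff less_2_cases_iff)
  then obtain i where Ji: "J = {i}" by (rule card_1_singletonE)
  have "deviate {i} a x = deviate {i} (\<lambda>_. a i) x" by (auto simp: deviate_def fun_eq_iff)
  moreover have "a i \<in> Ap I A p x i" using a Ji JI by (auto simp: PiE_iff)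
  ultimately have "p_ext I A p (deviate J a x) = 0" using Ji by (simp add: Ap_def)
  thus False using Jpos by simp
qed

lemma comp_nonabs: "C \<in> components I A p \<Longrightarrow> C \<subseteq> nonabs I A p"
  unfolding components_def by auto

lemma mix_path:
  assumes s: "s \<in> PiE I S" and b: "b \<in> PiE I S" and sub: "PiE I S \<subseteq> nonabs I A p" and K: "K \<subseteq> I"
  shows "(adj I A p)\<^sup>*\<^sup>* s (\<lambda>j. if j \<in> K then b j else s j)"
proof -
  have "finite K" using K finI finite_subset by blast
  thus ?thesis using K
  proof (induction K rule: finite_induct)
    case empty thus ?case by simp
  next
    case (insert k K)
    let ?m1 = "(\<lambda>j. if j \<in> K then b j else s j)" and ?m2 = "(\<lambda>j. if j \<in> insert k K then b j else s j)"
    have m1: "?m1 \<in> PiE I S" and m2: "?m2 \<in> PiE I S" using s b by (auto simp: PiE_iff extensional_def)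
    have "adj I A p ?m1 ?m2" unfolding adj_def using m1 m2 sub insert.prems
      by (intro conjI bexI[of _ k]) auto
    thus ?case using insert by (meson insert_subset rtranclp.rtrancl_into_rtrancl)
  qed
qed

lemma conn:
  assumes C: "C \<in> components I A p" and sub: "PiE I S \<subseteq> nonabs I A p" and s: "s \<in> PiE I S" "s \<in> C"
  shows "PiE I S \<subseteq> C"
proof
  fix b assume b: "b \<in> PiE I S"
  obtain a0 where C0: "C = {b \<in> nonabs I A p. (adj I A p)\<^sup>*\<^sup>* a0 b}" using C unfolding components_def by auto
  have "(adj I A p)\<^sup>*\<^sup>* s (\<lambda>j. if j \<in> I then b j else s j)" using mix_path[OF s(1) b sub] by simp
  moreover have "(\<lambda>j. if j \<in> I then b j else s j) = b" using s(1) b by (auto simp: PiE_iff extensional_def fun_eq_iff)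
  ultimately have "(adj I A p)\<^sup>*\<^sup>* a0 b" using s(2) C0 by auto
  thus "b \<in> C" using C0 b sub by auto
qed

lemma comp_exit:
  assumes C: "C \<in> components I A p" and sub: "PiE I S \<subseteq> C" and ne: "PiE I S \<noteq> C" and s: "s \<in> PiE I S"
  shows "\<exists>e e' i. e \<in> PiE I S \<and> e' \<in> nonabs I A p \<and> i \<in> I \<and> e' i \<notin> S i \<and> (\<forall>j\<in>I-{i}. e j = e' j)"
proof -
  obtain a0 where C0: "C = {b \<in> nonabs I A p. (adj I A p)\<^sup>*\<^sup>* a0 b}" using C unfolding components_def by auto
  obtain d where d: "d \<in> C" "d \<notin> PiE I S" using sub ne by auto
  have sym: "adj I A p u v \<Longrightarrow> adj I A p v u" for u v unfolding adj_def by metis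
  have "\<exists>e e'. adj I A p e e' \<and> e \<in> PiE I S \<and> e' \<notin> PiE I S"
  proof (cases "a0 \<in> PiE I S")
    case True
    thus ?thesis using rtranclp_edge[of "adj I A p" a0 d "\<lambda>u. u \<in> PiE I S"] d C0 by auto
  next
    case False
    have "(adj I A p)\<^sup>*\<^sup>* a0 s" using s sub C0 by auto
    then obtain e e' where "adj I A p e e'" "e \<notin> PiE I S" "e' \<in> PiE I S"
      using rtranclp_edge[of "adj I A p" a0 s "\<lambda>u. u \<notin> PiE I S"] False s by auto
    thus ?thesis using sym by blast
  qed
  then obtain e e' where ee: "adj I A p e e'" "e \<in> PiE I S" "e' \<notin> PiE I S" by blast
  then obtain i where i: "i \<in> I" "\<forall>j\<in>I-{i}. e j = e' j" "e' \<in> nonabs I A p" unfolding adj_def by blast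
  have "e' i \<notin> S i"
  proof
    assume "e' i \<in> S i"
    moreover have "e' \<in> extensional I" using i(3) by (auto simp: nonabs_def profiles_def PiE_iff)
    moreover have "\<forall>j\<in>I. e' j \<in> S j"
    proof
      fix j assume "j \<in> I"
      thus "e' j \<in> S j" using ee(2) i \<open>e' i \<in> S i\<close> by (cases "j = i") (auto simp: PiE_iff)
    qed
    ultimately have "e' \<in> PiE I S" by (auto simp: PiE_iff)
    thus False using ee(3) by simp
  qed
  thus ?thesis using ee i by blast
qed

end



context game begin

lemma mixed_dev1: "x \<in> mixed_profiles I A \<Longrightarrow> b \<in> A i \<Longrightarrow> deviate {i} (\<lambda>_. b) x \<in> mixed_profiles I A"
  by (rule mixed_deviate) auto

lemma Xcomp_p0:
  assumes C: "C \<in> components I A p" and x: "x \<in> Xcomp I A C"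
  shows "p_ext I A p x = 0"
proof -
  have xm: "x \<in> mixed_profiles I A" using x by (simp add: Xcomp_def)
  show ?thesis unfolding p_ext_zero_iff[OF xm]
    using x comp_nonabs[OF C] by (auto simp: Xcomp_def nonabs_def)
qed

lemma supp_Ap:
  assumes C: "C \<in> components I A p" and x: "x \<in> Xcomp I A C" and i: "i \<in> I"
  shows "supp (x i) (A i) \<subseteq> Ap I A p x i"
proof
  fix s assume s: "s \<in> supp (x i) (A i)"
  have xm: "x \<in> mixed_profiles I A" using x by (simp add: Xcomp_def)
  have sA: "s \<in> A i" using s by (simp add: supp_def)
  have dm: "deviate {i} (\<lambda>_. s) x \<in> mixed_profiles I A" using mixed_dev1[OF xm sA] .
  have "p_ext I A p (deviate {i} (\<lambda>_. s) x) = 0"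
    unfolding p_ext_zero_iff[OF dm]
  proof
    fix b assume b: "b \<in> PiE I (\<lambda>j. supp (deviate {i} (\<lambda>_. s) x j) (A j))"
    have "b \<in> PiE I (\<lambda>j. supp (x j) (A j))"
    proof -
      have "\<forall>j\<in>I. b j \<in> supp (x j) (A j)"
      proof
        fix j assume j: "j \<in> I"
        show "b j \<in> supp (x j) (A j)"
          using b j s supp_deviate[of j "{i}" "\<lambda>_. s" x] sA by (cases "j = i") (auto simp: PiE_iff)
      qed
      thus ?thesis using b by (auto simp: PiE_iff)
    qed
    hence "b \<in> C" using x by (auto simp: Xcomp_def)
    thus "p b = 0" using comp_nonabs[OF C] by (auto simp: nonabs_def)
  qed
  thus "s \<in> Ap I A p x i" using sA by (simp add: Ap_def)
qed

lemma mono_dev: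
  assumes y: "y \<in> mixed_profiles I A" and y': "y' \<in> mixed_profiles I A"
    and sub: "\<And>j. j \<in> I \<Longrightarrow> supp (y' j) (A j) \<subseteq> supp (y j) (A j)"
    and b: "b \<in> A i" and z: "p_ext I A p (deviate {i} (\<lambda>_. b) y) = 0"
  shows "p_ext I A p (deviate {i} (\<lambda>_. b) y') = 0"
proof (rule p_ext_mono[OF _ _ _ z])
  show "deviate {i} (\<lambda>_. b) y \<in> mixed_profiles I A" "deviate {i} (\<lambda>_. b) y' \<in> mixed_profiles I A"
    using mixed_dev1[OF y b] mixed_dev1[OF y' b] by auto
  fix j assume "j \<in> I"
  thus "supp (deviate {i} (\<lambda>_. b) y' j) (A j) \<subseteq> supp (deviate {i} (\<lambda>_. b) y j) (A j)"
    using sub supp_deviate[of j "{i}" "\<lambda>_. b"] b by (cases "j = i") auto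
qed

lemma in_Ap_prod:
  assumes y: "y \<in> mixed_profiles I A" and SB: "PiE I S \<subseteq> nonabs I A p"
    and sub: "\<And>j. j \<in> I \<Longrightarrow> supp (y j) (A j) \<subseteq> S j"
    and i: "i \<in> I" and b: "b \<in> S i" "b \<in> A i"
  shows "p_ext I A p (deviate {i} (\<lambda>_. b) y) = 0"
proof -
  have dm: "deviate {i} (\<lambda>_. b) y \<in> mixed_profiles I A" using mixed_dev1[OF y b(2)] .
  show ?thesis unfolding p_ext_zero_iff[OF dm]
  proof
    fix c assume c: "c \<in> PiE I (\<lambda>j. supp (deviate {i} (\<lambda>_. b) y j) (A j))"
    have "\<forall>j\<in>I. c j \<in> S j"
    proof
      fix j assume j: "j \<in> I"
      show "c j \<in> S j"
        using c j sub[OF j] supp_deviate[of j "{i}" "\<lambda>_. b" y] b by (cases "j = i") (auto simp: PiE_iff)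
    qed
    hence "c \<in> PiE I S" using c by (auto simp: PiE_iff)
    thus "p c = 0" using SB by (auto simp: nonabs_def)
  qed
qed

lemma sandwich:
  assumes x: "x \<in> mixed_profiles I A" and y: "y \<in> mixed_profiles I A"
    and s1: "\<And>j. j \<in> I \<Longrightarrow> supp (x j) (A j) \<subseteq> supp (y j) (A j)"
    and s2: "\<And>j. j \<in> I \<Longrightarrow> supp (y j) (A j) \<subseteq> Ap I A p x j"
    and SB: "PiE I (Ap I A p x) \<subseteq> nonabs I A p"
    and b: "b \<in> A i" and i: "i \<in> I"
  shows "p_ext I A p (deviate {i} (\<lambda>_. b) y) > 0 \<longleftrightarrow> p_ext I A p (deviate {i} (\<lambda>_. b) x) > 0"
proof -
  have n1: "0 \<le> p_ext I A p (deviate {i} (\<lambda>_. b) y)" and n2: "0 \<le> p_ext I A p (deviate {i} (\<lambda>_. b) x)"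
    using p_ext_nonneg mixed_dev1[OF y b] mixed_dev1[OF x b] by auto
  have "p_ext I A p (deviate {i} (\<lambda>_. b) y) = 0 \<longleftrightarrow> p_ext I A p (deviate {i} (\<lambda>_. b) x) = 0"
  proof
    assume "p_ext I A p (deviate {i} (\<lambda>_. b) y) = 0"
    thus "p_ext I A p (deviate {i} (\<lambda>_. b) x) = 0" using mono_dev[OF y x s1 b] by blast
  next
    assume "p_ext I A p (deviate {i} (\<lambda>_. b) x) = 0"
    hence "b \<in> Ap I A p x i" using b by (simp add: Ap_def)
    thus "p_ext I A p (deviate {i} (\<lambda>_. b) y) = 0" using in_Ap_prod[OF y SB s2 i] b by blast
  qed
  thus ?thesis using n1 n2 by linarith
qed

end



context game begin

lemma step_up:
  fixes r w
  assumes nr: "\<forall>C\<in>components I A p. \<not> rectangular I C"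
    and notW: "\<And>C x. C \<in> components I A p \<Longrightarrow> x \<in> Xcomp I A C \<Longrightarrow> w \<notin> W_at I A p r x"
    and C: "C \<in> components I A p" and x: "x \<in> Xcomp I A C" and wx: "w \<in> WH_at I A p r x"
    and nj: "joint_exits I A p x = {}"
  shows "\<exists>C'\<in>components I A p. \<exists>y\<in>Xcomp I A C'. w \<in> WH_at I A p r y \<and>
           card (PiE I (Ap I A p x)) < card (PiE I (Ap I A p y))"
proof -
  define S where "S = Ap I A p x"
  have xm: "x \<in> mixed_profiles I A" using x by (simp add: Xcomp_def)
  have px: "p_ext I A p x = 0" by (rule Xcomp_p0[OF C x])
  have SA: "\<And>j. S j \<subseteq> A j" by (auto simp: S_def Ap_def)
  have SB: "PiE I S \<subseteq> nonabs I A p"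
  proof
    fix a assume a: "a \<in> PiE I S"
    have "p a = 0" using noJ_product[OF xm px nj] a by (simp add: S_def)
    moreover have "a \<in> profiles I A" using a SA by (auto simp: profiles_def PiE_iff)
    ultimately show "a \<in> nonabs I A p" by (simp add: nonabs_def)
  qed
  have suppS: "\<And>j. j \<in> I \<Longrightarrow> supp (x j) (A j) \<subseteq> S j" using supp_Ap[OF C x] by (simp add: S_def)
  have "PiE I (\<lambda>j. supp (x j) (A j)) \<noteq> {}" using supp_nonempty[OF xm] by (simp add: PiE_eq_empty_iff)
  then obtain s0 where s0: "s0 \<in> PiE I (\<lambda>j. supp (x j) (A j))" by blast
  have s0C: "s0 \<in> C" using s0 x by (auto simp: Xcomp_def)
  have s0S: "s0 \<in> PiE I S" using s0 suppS by (auto simp: PiE_iff)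
  have SC: "PiE I S \<subseteq> C" by (rule conn[OF C SB s0S s0C])
  have Sne: "\<And>j. j \<in> I \<Longrightarrow> S j \<noteq> {}" using s0S by (auto simp: PiE_iff)
  have Sfin: "\<And>j. j \<in> I \<Longrightarrow> finite (S j)" using SA finA finite_subset by blast
  define z where "z = (\<lambda>j a. if a \<in> S j then 1 / real (card (S j)) else 0)"
  have zm: "z \<in> mixed_profiles I A"
    unfolding mixed_profiles_def
  proof (intro CollectI ballI conjI allI impI)
    fix i a assume "i \<in> I" "a \<in> A i"
    show "0 \<le> z i a" by (simp add: z_def)
  next
    fix i a assume "i \<in> I" "a \<notin> A i"
    thus "z i a = 0" using SA by (auto simp: z_def)
  next
    fix i assume i: "i \<in> I"
    have "sum (z i) (A i) = sum (z i) (S i)"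
      by (rule sum.mono_neutral_right) (use finA[OF i] SA in \<open>auto simp: z_def\<close>)
    also have "\<dots> = 1" using Sne[OF i] Sfin[OF i] by (simp add: z_def)
    finally show "sum (z i) (A i) = 1" .
  qed
  have suppz: "\<And>j. j \<in> I \<Longrightarrow> supp (z j) (A j) = S j"
    using SA Sfin Sne by (auto simp: supp_def z_def card_gt_0_iff)
  define \<gamma> where "\<gamma> = (\<lambda>t::real. (\<lambda>j a. (1-t) * x j a + t * z j a))"
  have gm: "\<gamma> t \<in> mixed_profiles I A" if "t \<in> {0..1}" for t
    unfolding \<gamma>_def using mixed_comb[OF xm zm] that by auto
  have g1: "\<gamma> 1 = z" by (simp add: \<gamma>_def)
  have gsub: "supp (\<gamma> t j) (A j) \<subseteq> S j" if "t \<in> {0..1}" "j \<in> I" for t j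
  proof -
    have "supp (\<gamma> t j) (A j) \<subseteq> supp (x j) (A j) \<union> supp (z j) (A j)"
      unfolding \<gamma>_def using supp_comb_sub[of "A j" "x j" "z j" t] that mixedD[OF xm] mixedD[OF zm] by auto
    thus ?thesis using suppS suppz that by auto
  qed
  have gsup: "supp (x j) (A j) \<subseteq> supp (\<gamma> t j) (A j)" if "t \<in> {0..1}" "j \<in> I" for t j
  proof (cases "t = 1")
    case True thus ?thesis using g1 suppz suppS that by auto
  next
    case False
    thus ?thesis unfolding \<gamma>_def using supp_comb_sup1[of "A j" "x j" "z j" t] that mixedD[OF xm] mixedD[OF zm] by auto
  qed
  have gX: "\<gamma> t \<in> Xcomp I A C" if "t \<in> {0..1}" for t
    unfolding Xcomp_def using gm[OF that] gsub[OF that] SC by (auto simp: PiE_iff) (metis PiE_iff subsetD)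
  have wz: "w \<in> WH_at I A p r z"
  proof (rule path_lemma[OF \<gamma>_def])
    show "\<forall>t\<in>{0..1}. w \<notin> W_at I A p r (\<gamma> t)" using notW[OF C gX] by blast
    show "w \<in> WH_at I A p r x" by fact
    show "\<forall>t\<in>{0..<1}. \<forall>j\<in>I. \<forall>b\<in>A j. (p_ext I A p (deviate {j} (\<lambda>_. b) (\<gamma> t)) > 0 \<longleftrightarrow> p_ext I A p (deviate {j} (\<lambda>_. b) x) > 0)"
    proof (intro ballI)
      fix t j b assume t: "t \<in> {0..<1::real}" and j: "j \<in> I" and b: "b \<in> A j"
      have t': "t \<in> {0..1}" using t by auto
      show "(p_ext I A p (deviate {j} (\<lambda>_. b) (\<gamma> t)) > 0 \<longleftrightarrow> p_ext I A p (deviate {j} (\<lambda>_. b) x) > 0)"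
        by (rule sandwich[OF xm gm[OF t'] gsup[OF t'] _ SB[unfolded S_def] b j])
           (use gsub[OF t'] in \<open>auto simp: S_def\<close>)
    qed
    show "\<forall>j\<in>I. \<forall>b\<in>A j. p_ext I A p (deviate {j} (\<lambda>_. b) z) > 0 \<longrightarrow> p_ext I A p (deviate {j} (\<lambda>_. b) x) > 0"
    proof (intro ballI)
      fix j b assume j: "j \<in> I" and b: "b \<in> A j"
      have t': "(1::real) \<in> {0..1}" by auto
      show "p_ext I A p (deviate {j} (\<lambda>_. b) z) > 0 \<longrightarrow> p_ext I A p (deviate {j} (\<lambda>_. b) x) > 0"
        using sandwich[OF xm gm[OF t'] gsup[OF t'] _ SB[unfolded S_def] b j] gsub[OF t'] g1
        by (auto simp: S_def)
    qed
  qed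
  have zX: "z \<in> Xcomp I A C" using gX[of 1] g1 by simp
  have "C \<noteq> PiE I S" using nr C unfolding rectangular_def by blast
  then obtain e e' i where ee: "e \<in> PiE I S" "e' \<in> nonabs I A p" "i \<in> I" "e' i \<notin> S i"
      "\<forall>j\<in>I-{i}. e j = e' j"
    using comp_exit[OF C SC _ s0S] by metis
  define y where "y = deviate (- {i}) e z"
  have eA: "\<And>j. j \<in> I \<Longrightarrow> e j \<in> A j" using ee(1) SA by (auto simp: PiE_iff)
  have ym: "y \<in> mixed_profiles I A" unfolding y_def by (rule mixed_deviate[OF zm]) (use eA in auto)
  have suppy: "supp (y j) (A j) = (if j = i then S i else {e j})" if j: "j \<in> I" for j
    unfolding y_def using supp_deviate[of j "- {i}" e z] eA[OF j] suppz[OF j] by auto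
  have suppyS: "supp (y j) (A j) \<subseteq> S j" if j: "j \<in> I" for j
    using suppy[OF j] ee(1) j by (auto simp: PiE_iff)
  define \<gamma>' where "\<gamma>' = (\<lambda>t::real. (\<lambda>j a. (1-t) * z j a + t * y j a))"
  have gm': "\<gamma>' t \<in> mixed_profiles I A" if "t \<in> {0..1}" for t
    unfolding \<gamma>'_def using mixed_comb[OF zm ym] that by auto
  have g1': "\<gamma>' 1 = y" by (simp add: \<gamma>'_def)
  have gsub': "supp (\<gamma>' t j) (A j) \<subseteq> S j" if "t \<in> {0..1}" "j \<in> I" for t j
  proof -
    have "supp (\<gamma>' t j) (A j) \<subseteq> supp (z j) (A j) \<union> supp (y j) (A j)"
      unfolding \<gamma>'_def using supp_comb_sub[of "A j" "z j" "y j" t] that mixedD[OF zm] mixedD[OF ym] by auto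
    thus ?thesis using suppyS suppz that by auto
  qed
  have geq': "supp (\<gamma>' t j) (A j) = supp (z j) (A j)" if "t \<in> {0..<1}" "j \<in> I" for t j
  proof
    show "supp (\<gamma>' t j) (A j) \<subseteq> supp (z j) (A j)" using gsub'[of t j] that suppz by auto
    show "supp (z j) (A j) \<subseteq> supp (\<gamma>' t j) (A j)"
      unfolding \<gamma>'_def using supp_comb_sup1[of "A j" "z j" "y j" t] that mixedD[OF zm] mixedD[OF ym] by auto
  qed
  have gX': "\<gamma>' t \<in> Xcomp I A C" if "t \<in> {0..1}" for t
    unfolding Xcomp_def using gm'[OF that] gsub'[OF that] SC by (auto simp: PiE_iff) (metis PiE_iff subsetD)
  have wy: "w \<in> WH_at I A p r y"
  proof (rule path_lemma[OF \<gamma>'_def])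
    show "\<forall>t\<in>{0..1}. w \<notin> W_at I A p r (\<gamma>' t)" using notW[OF C gX'] by blast
    show "w \<in> WH_at I A p r z" by fact
    show "\<forall>t\<in>{0..<1}. \<forall>j\<in>I. \<forall>b\<in>A j. (p_ext I A p (deviate {j} (\<lambda>_. b) (\<gamma>' t)) > 0 \<longleftrightarrow> p_ext I A p (deviate {j} (\<lambda>_. b) z) > 0)"
    proof (intro ballI)
      fix t j b assume t: "t \<in> {0..<1::real}" and j: "j \<in> I" and b: "b \<in> A j"
      have t': "t \<in> {0..1}" using t by auto
      have n1: "0 \<le> p_ext I A p (deviate {j} (\<lambda>_. b) (\<gamma>' t))" and n2: "0 \<le> p_ext I A p (deviate {j} (\<lambda>_. b) z)"
        using p_ext_nonneg mixed_dev1[OF gm'[OF t'] b] mixed_dev1[OF zm b] by auto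
      have "p_ext I A p (deviate {j} (\<lambda>_. b) (\<gamma>' t)) = 0 \<longleftrightarrow> p_ext I A p (deviate {j} (\<lambda>_. b) z) = 0"
        using mono_dev[OF gm'[OF t'] zm _ b] mono_dev[OF zm gm'[OF t'] _ b] geq'[OF t] by blast
      thus "(p_ext I A p (deviate {j} (\<lambda>_. b) (\<gamma>' t)) > 0 \<longleftrightarrow> p_ext I A p (deviate {j} (\<lambda>_. b) z) > 0)"
        using n1 n2 by linarith
    qed
    show "\<forall>j\<in>I. \<forall>b\<in>A j. p_ext I A p (deviate {j} (\<lambda>_. b) y) > 0 \<longrightarrow> p_ext I A p (deviate {j} (\<lambda>_. b) z) > 0"
    proof (intro ballI impI)
      fix j b assume j: "j \<in> I" and b: "b \<in> A j" and pos: "p_ext I A p (deviate {j} (\<lambda>_. b) y) > 0"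
      have n2: "0 \<le> p_ext I A p (deviate {j} (\<lambda>_. b) z)" using p_ext_nonneg mixed_dev1[OF zm b] by auto
      have "p_ext I A p (deviate {j} (\<lambda>_. b) z) \<noteq> 0"
        using mono_dev[OF zm ym _ b] suppyS suppz pos by auto
      thus "p_ext I A p (deviate {j} (\<lambda>_. b) z) > 0" using n2 by linarith
    qed
  qed
  have yX: "y \<in> Xcomp I A C" using gX'[of 1] g1' by simp
  have ApyS: "S j \<subseteq> Ap I A p y j" if j: "j \<in> I" for j
  proof
    fix c assume c: "c \<in> S j"
    have "p_ext I A p (deviate {j} (\<lambda>_. c) y) = 0"
      using in_Ap_prod[OF ym SB suppyS j c] SA c by auto
    thus "c \<in> Ap I A p y j" using SA c by (auto simp: Ap_def)
  qed
  have e'A: "e' i \<in> A i" using ee(2,3) by (auto simp: nonabs_def profiles_def PiE_iff)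
  have e'Ap: "e' i \<in> Ap I A p y i"
  proof -
    have dm: "deviate {i} (\<lambda>_. e' i) y \<in> mixed_profiles I A" using mixed_dev1[OF ym e'A] .
    have "p_ext I A p (deviate {i} (\<lambda>_. e' i) y) = 0"
      unfolding p_ext_zero_iff[OF dm]
    proof
      fix d assume d: "d \<in> PiE I (\<lambda>j. supp (deviate {i} (\<lambda>_. e' i) y j) (A j))"
      have "d = e'"
      proof
        fix j show "d j = e' j"
        proof (cases "j \<in> I")
          case True
          show ?thesis
          proof (cases "j = i")
            case True
            thus ?thesis using d supp_deviate[of i "{i}" "\<lambda>_. e' i" y] e'A ee(3) by (auto simp: PiE_iff)
          next
            case False
            hence "d j \<in> supp (y j) (A j)" using d \<open>j \<in> I\<close> supp_deviate[of j "{i}" "\<lambda>_. e' i" y]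
              by (auto simp: PiE_iff)
            hence "d j = e j" using suppy[OF \<open>j \<in> I\<close>] False by auto
            thus ?thesis using ee(5) False \<open>j \<in> I\<close> by auto
          qed
        next
          case False
          thus ?thesis using d ee(2) by (auto simp: PiE_iff nonabs_def profiles_def extensional_def)
        qed
      qed
      thus "p d = 0" using ee(2) by (simp add: nonabs_def)
    qed
    thus ?thesis using e'A by (simp add: Ap_def)
  qed
  have fin2: "finite (PiE I (Ap I A p y))"
    by (rule finite_PiE[OF finI]) (use finA in \<open>auto simp: Ap_def\<close>)
  have "PiE I S \<subset> PiE I (Ap I A p y)"
  proof
    show "PiE I S \<subseteq> PiE I (Ap I A p y)" using ApyS by (auto simp: PiE_iff)
    have "s0(i := e' i) \<in> PiE I (Ap I A p y)" using s0S ApyS e'Ap ee(3) by (auto simp: PiE_iff extensional_def)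
    moreover have "s0(i := e' i) \<notin> PiE I S" using ee(3,4) by (auto simp: PiE_iff)
    ultimately show "PiE I S \<noteq> PiE I (Ap I A p y)" by blast
  qed
  hence "card (PiE I S) < card (PiE I (Ap I A p y))" using fin2 psubset_card_mono by blast
  thus ?thesis using C yX wy by (auto simp: S_def)
qed

end



theorem mainTheorem8:
  fixes I :: "'i set" and A :: "'i \<Rightarrow> 'a set"
    and r :: "'i \<Rightarrow> ('i \<Rightarrow> 'a) \<Rightarrow> real" and p :: "('i \<Rightarrow> 'a) \<Rightarrow> real"
    and w :: "'i \<Rightarrow> real"
  assumes "finite I"
    and "\<forall>i\<in>I. finite (A i) \<and> A i \<noteq> {}"
    and "\<forall>i\<in>I. \<forall>a\<in>profiles I A. 0 < r i a \<and> r i a \<le> 1"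
    and "\<forall>a\<in>profiles I A. 0 \<le> p a \<and> p a \<le> 1"
    and "\<forall>C\<in>components I A p. \<not> rectangular I C"
    and "w \<in> WH I A p r - W I A p r"
  shows "\<exists>C\<in>components I A p. \<exists>x\<in>Xcomp I A C.
           w \<in> WH_at I A p r x \<and> joint_exits I A p x \<noteq> {}"
proof -
  interpret game I A p using assms(1,2,4) by unfold_locales auto
  show ?thesis
  proof (rule ccontr)
    assume H: "\<not> ?thesis"
    define G where "G = {x. \<exists>C\<in>components I A p. x \<in> Xcomp I A C \<and> w \<in> WH_at I A p r x}"
    have notW: "\<And>C x. C \<in> components I A p \<Longrightarrow> x \<in> Xcomp I A C \<Longrightarrow> w \<notin> W_at I A p r x"
      using assms(6) by (auto simp: W_def Xall_def)
    define N where "N = (\<lambda>x. card (PiE I (Ap I A p x)))"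
    have Nb: "N x \<le> card (profiles I A)" for x
      unfolding N_def profiles_def
      by (rule card_mono) (auto simp: finite_PiE finI finA Ap_def PiE_iff)
    have "G \<noteq> {}" using assms(6) by (auto simp: G_def WH_def Xall_def)
    have "finite (N ` G)" by (rule finite_subset[of _ "{..card (profiles I A)}"]) (use Nb in auto)
    hence "Max (N ` G) \<in> N ` G" using \<open>G \<noteq> {}\<close> by (intro Max_in) auto
    then obtain x where xG: "x \<in> G" and xmax: "\<And>y. y \<in> G \<Longrightarrow> N y \<le> N x"
      using \<open>finite (N ` G)\<close> by (metis Max_ge imageI image_iff)
    obtain C where C: "C \<in> components I A p" "x \<in> Xcomp I A C" "w \<in> WH_at I A p r x"
      using xG by (auto simp: G_def)
    have nj: "joint_exits I A p x = {}" using H C by blast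
    have st: "\<exists>C'\<in>components I A p. \<exists>y\<in>Xcomp I A C'. w \<in> WH_at I A p r y \<and>
           card (PiE I (Ap I A p x)) < card (PiE I (Ap I A p y))"
      by (rule step_up[OF assms(5) _ C nj]) (simp add: notW)
    obtain C' y where "C' \<in> components I A p" "y \<in> Xcomp I A C'" "w \<in> WH_at I A p r y"
        "N x < N y"
      using st unfolding N_def by blast
    hence "y \<in> G" "N x < N y" by (auto simp: G_def)
    thus False using xmax by fastforce
  qed
qed



end
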